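(* Let $E\subseteq Z$ be nonempty, $\gamma\in\Delta^\circ(E)$, $i\in\mathcal I$ and $\theta,\theta'\in\Theta$. Then $$\big[\mathcal L_i^Y(\eta,\theta)\subseteq\mathcal L_i^Y(\eta,\theta')\text{ for all }\eta\in\Delta(E)\big]\iff\mathcal L_i^Y(\gamma,\theta)\subseteq\mathcal L_i^Y(\gamma,\theta').$$
   Context: $Z$ is a finite set, $Y=\Delta(Z)$, $\mathcal I$ a finite set of agents, $\Theta$ a set of states; for each $(i,\theta)$, $u_i^\theta:Z\to\mathbb R$ and $U_i^\theta(y)=\sum_zy_zu_i^\theta(z)$. $\mathcal L_i^Y(\alpha,\theta)=\{y\in Y:U_i^\theta(\alpha)\ge U_i^\theta(y)\}$. For nonempty $E\subseteq Z$, $\Delta(E)$ is the set of lotteries supported in $E$ and $\Delta^\circ(E)$ the set of lotteries whose support is exactly $E$. *)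

theory Defs
  imports "HOL-Probability.Probability_Mass_Function"
begin

text \<open>Outcomes Z are a finite type; lotteries Y = Delta(Z) are pmfs on Z.\<close>

definition expU :: "('z::finite \<Rightarrow> real) \<Rightarrow> 'z pmf \<Rightarrow> real" where
  "expU u y = (\<Sum>z\<in>UNIV. pmf y z * u z)"

definition lowerY :: "('i \<Rightarrow> 'th \<Rightarrow> 'z::finite \<Rightarrow> real) \<Rightarrow> 'i \<Rightarrow> 'z pmf \<Rightarrow> 'th \<Rightarrow> 'z pmf set" where
  "lowerY u i \<alpha> \<theta> = {y. expU (u i \<theta>) \<alpha> \<ge> expU (u i \<theta>) y}"

definition Delta :: "'z set \<Rightarrow> 'z pmf set" where
  "Delta E = {p. set_pmf p \<subseteq> E}"

definition Delta_circ :: "'z set \<Rightarrow> 'z pmf set" where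
  "Delta_circ E = {p. set_pmf p = E}"

end

theory Submission
  imports Defs
begin

theorem lemma11:
  fixes u :: "'i \<Rightarrow> 'th \<Rightarrow> 'z::finite \<Rightarrow> real"
    and E :: "'z set" and \<gamma> :: "'z pmf" and i :: 'i and \<theta> \<theta>' :: 'th
  assumes "E \<noteq> {}" and "\<gamma> \<in> Delta_circ E"
  shows "(\<forall>\<eta>\<in>Delta E. lowerY u i \<eta> \<theta> \<subseteq> lowerY u i \<eta> \<theta>')
         \<longleftrightarrow> lowerY u i \<gamma> \<theta> \<subseteq> lowerY u i \<gamma> \<theta>'"
proof
  have sg: "set_pmf \<gamma> = E" using assms(2) by (simp add: Delta_circ_def)
  assume "\<forall>\<eta>\<in>Delta E. lowerY u i \<eta> \<theta> \<subseteq> lowerY u i \<eta> \<theta>'"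
  moreover have "\<gamma> \<in> Delta E" using sg by (simp add: Delta_def)
  ultimately show "lowerY u i \<gamma> \<theta> \<subseteq> lowerY u i \<gamma> \<theta>'" by blast
next
  have sg: "set_pmf \<gamma> = E" using assms(2) by (simp add: Delta_circ_def)
  assume H: "lowerY u i \<gamma> \<theta> \<subseteq> lowerY u i \<gamma> \<theta>'"
  show "\<forall>\<eta>\<in>Delta E. lowerY u i \<eta> \<theta> \<subseteq> lowerY u i \<eta> \<theta>'"
  proof (intro ballI subsetI)
    fix \<eta> y assume hE: "\<eta> \<in> Delta E" and hy: "y \<in> lowerY u i \<eta> \<theta>"
    have sE: "set_pmf \<eta> \<subseteq> E" using hE by (simp add: Delta_def)
    define e where "e = Min (pmf \<gamma> ` E)"
    have finE: "finite E" by simp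
    have pos: "\<And>z. z \<in> E \<Longrightarrow> pmf \<gamma> z > 0" using sg
      by (metis pmf_positive)
    have epos: "e > 0" unfolding e_def using finE assms(1) pos by simp
    have ele: "\<And>z. z \<in> E \<Longrightarrow> e \<le> pmf \<gamma> z" unfolding e_def using finE by simp
    define f where "f z = e * pmf y z + pmf \<gamma> z - e * pmf \<eta> z" for z
    have fnn: "\<And>z. 0 \<le> f z"
    proof -
      fix z
      show "0 \<le> f z"
      proof (cases "z \<in> E")
        case True
        have "e * pmf \<eta> z \<le> e * 1" using epos pmf_le_1[of \<eta> z]
          by (intro mult_left_mono) auto
        then show ?thesis using ele[OF True] epos unfolding f_def
          by (smt (verit) mult_nonneg_nonneg pmf_nonneg)
      next
        case False
        then have "pmf \<eta> z = 0" using sE by (meson set_pmf_iff subsetD)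
        then show ?thesis unfolding f_def using epos by simp
      qed
    qed
    have s1: "sum (pmf p) UNIV = 1" for p :: "'z pmf" by (rule sum_pmf_eq_1) auto
    have fs: "sum f UNIV = 1"
      unfolding f_def by (simp add: sum.distrib sum_subtractf sum_distrib_left[symmetric] s1)
    have prob: "(\<integral>\<^sup>+x. f x \<partial>count_space UNIV) = 1"
      by (simp add: nn_integral_count_space_finite fnn fs)
    define y' where "y' = embed_pmf f"
    have py: "pmf y' z = f z" for z unfolding y'_def
      by (rule pmf_embed_pmf[OF fnn prob])
    have eU: "expU w y' = e * expU w y + expU w \<gamma> - e * expU w \<eta>" for w
      unfolding expU_def py f_def
      by (simp add: algebra_simps sum.distrib sum_subtractf sum_distrib_left)
    have "expU (u i \<theta>) y \<le> expU (u i \<theta>) \<eta>" using hy by (simp add: lowerY_def)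
    then have "y' \<in> lowerY u i \<gamma> \<theta>" using epos
      by (simp add: lowerY_def eU mult_left_mono)
    then have "y' \<in> lowerY u i \<gamma> \<theta>'" using H by blast
    then have "e * expU (u i \<theta>') y \<le> e * expU (u i \<theta>') \<eta>"
      by (simp add: lowerY_def eU)
    then show "y \<in> lowerY u i \<eta> \<theta>'" using epos by (simp add: lowerY_def)
  qed
qed

end
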